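(* Let $n\ge 1$, $F\in\mathbb{R}[z_1,\dots,z_n]$, and let $Y=\{(z,u)\in\mathbb{C}^{n+1}: F(z)+u=0\}$. Put $$\psi(x,t,z,u)=\Big(\langle x'-z,d_zF(z)\rangle+x_{n+1}-u\Big)^2-t^2\Big(1+\sum_{j=1}^n\big(\tfrac{\partial F}{\partial z_j}(z)\big)^2\Big),$$ for $x=(x',x_{n+1})\in\mathbb{C}^{n+1}$, $x'=(x_1,\dots,x_n)$, $t\in\mathbb{C}$, and let $$\pi:\ \Sigma:=\{(x,t,z,u)\in\mathbb{C}^{n+2}\times\mathbb{C}^{n+1}:\ (z,u)\in Y,\ \psi(x,t,z,u)=0\}\to\mathbb{C}^{n+2},\qquad (x,t,z,u)\mapsto (x,t).$$ If $x\in W_t$, then $(x,t)$ belongs to the critical value set of $\pi$.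
   Context: $\langle a,b\rangle=\sum_j a_jb_j$ and $d_zF=(\partial F/\partial z_1,\dots,\partial F/\partial z_n)$. $\psi$ is the product $\psi_+\psi_-$ of the two phase functions $\psi_\pm=(\langle x'-z,d_zF(z)\rangle+x_{n+1}-u)\pm t\,|(d_zF(z),1)|$, where $|(d_zF(z),1)|$ denotes a square root of $1+\sum_j(\partial F/\partial z_j)^2$. The wave front $W_t\subset\mathbb{C}^{n+1}$ at time $t$ with initial front $Y$ is the set of points $x=(x_1,\dots,x_{n+1})$ of the form $x_j=\pm t\,\frac{1}{|(d_zF(z),1)|}\frac{\partial F}{\partial z_j}(z)+z_j$ ($1\le j\le n$), $x_{n+1}=\pm t\,\frac{1}{|(d_zF(z),1)|}+u$, for some $(z,u)\in Y$ (same sign choice throughout). The critical value set of $\pi$ is the image under $\pi$ of the set of points of $\Sigma$ at which $\pi|_\Sigma$ fails to be a submersion (including singular points of $\Sigma$). *)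

theory Defs
  imports "HOL-Analysis.Analysis"
begin

text \<open>Points of complex affine spaces are represented as functions
  nat => complex; only finitely many coordinates are used.
  z = (z_1,...,z_n) is stored as z 0, ..., z (n-1);
  x = (x_1,...,x_(n+1)) is stored as x 0, ..., x n.
  A point (x,t,z,u) of C^(n+2) x C^(n+1) = C^(2n+3) is stored as p with
  p 0..p n = x, p (n+1) = t, p (n+2+j) = z_(j+1) for j<n, p (2n+2) = u,
  and p i = 0 for i >= 2n+3.\<close>

definition real_poly_fun :: "nat \<Rightarrow> ((nat \<Rightarrow> complex) \<Rightarrow> complex) \<Rightarrow> bool" where
  "real_poly_fun n F \<longleftrightarrow>
     (\<exists>(A :: (nat \<Rightarrow> nat) set) (c :: (nat \<Rightarrow> nat) \<Rightarrow> real). finite A \<and>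
        (\<forall>z. F z = (\<Sum>\<alpha>\<in>A. of_real (c \<alpha>) * (\<Prod>j<n. z j ^ \<alpha> j))))"

definition partial_c :: "((nat \<Rightarrow> complex) \<Rightarrow> complex) \<Rightarrow> nat \<Rightarrow> (nat \<Rightarrow> complex) \<Rightarrow> complex" where
  "partial_c G i p = deriv (\<lambda>w. G (p(i := w))) (p i)"

definition Yset :: "((nat \<Rightarrow> complex) \<Rightarrow> complex) \<Rightarrow> ((nat \<Rightarrow> complex) \<times> complex) set" where
  "Yset F = {(z, u). F z + u = 0}"

definition zc :: "nat \<Rightarrow> (nat \<Rightarrow> complex) \<Rightarrow> (nat \<Rightarrow> complex)" where
  "zc n p = (\<lambda>j. if j < n then p (n + 2 + j) else 0)"
definition uc :: "nat \<Rightarrow> (nat \<Rightarrow> complex) \<Rightarrow> complex" where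
  "uc n p = p (2 * n + 2)"
definition tc :: "nat \<Rightarrow> (nat \<Rightarrow> complex) \<Rightarrow> complex" where
  "tc n p = p (n + 1)"

definition G1 :: "nat \<Rightarrow> ((nat \<Rightarrow> complex) \<Rightarrow> complex) \<Rightarrow> (nat \<Rightarrow> complex) \<Rightarrow> complex" where
  "G1 n F p = F (zc n p) + uc n p"

definition psi :: "nat \<Rightarrow> ((nat \<Rightarrow> complex) \<Rightarrow> complex) \<Rightarrow> (nat \<Rightarrow> complex) \<Rightarrow> complex" where
  "psi n F p =
     ((\<Sum>j<n. (p j - zc n p j) * partial_c F j (zc n p)) + p n - uc n p)\<^sup>2
     - (tc n p)\<^sup>2 * (1 + (\<Sum>j<n. (partial_c F j (zc n p))\<^sup>2))"

definition Sigma_set :: "nat \<Rightarrow> ((nat \<Rightarrow> complex) \<Rightarrow> complex) \<Rightarrow> (nat \<Rightarrow> complex) set" where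
  "Sigma_set n F = {p. (\<forall>i\<ge>2*n+3. p i = 0) \<and> (zc n p, uc n p) \<in> Yset F \<and> psi n F p = 0}"

text \<open>Singular point of Sigma (Jacobian criterion for the defining equations G1, psi).\<close>
definition singular_pt :: "nat \<Rightarrow> ((nat \<Rightarrow> complex) \<Rightarrow> complex) \<Rightarrow> (nat \<Rightarrow> complex) \<Rightarrow> bool" where
  "singular_pt n F p \<longleftrightarrow>
     (\<exists>a b :: complex. (a, b) \<noteq> (0, 0) \<and>
        (\<forall>i<2*n+3. a * partial_c (G1 n F) i p + b * partial_c (psi n F) i p = 0))"

definition tangent_sp :: "nat \<Rightarrow> ((nat \<Rightarrow> complex) \<Rightarrow> complex) \<Rightarrow> (nat \<Rightarrow> complex) \<Rightarrow> (nat \<Rightarrow> complex) set" where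
  "tangent_sp n F p = {v. (\<forall>i\<ge>2*n+3. v i = 0) \<and>
      (\<Sum>i<2*n+3. partial_c (G1 n F) i p * v i) = 0 \<and>
      (\<Sum>i<2*n+3. partial_c (psi n F) i p * v i) = 0}"

definition proj_pi :: "nat \<Rightarrow> (nat \<Rightarrow> complex) \<Rightarrow> (nat \<Rightarrow> complex)" where
  "proj_pi n p = (\<lambda>i. if i < n + 2 then p i else 0)"

definition submersion_at :: "nat \<Rightarrow> ((nat \<Rightarrow> complex) \<Rightarrow> complex) \<Rightarrow> (nat \<Rightarrow> complex) \<Rightarrow> bool" where
  "submersion_at n F p \<longleftrightarrow>
     (\<forall>w :: nat \<Rightarrow> complex. \<exists>v\<in>tangent_sp n F p. \<forall>i<n+2. v i = w i)"

definition critical_values :: "nat \<Rightarrow> ((nat \<Rightarrow> complex) \<Rightarrow> complex) \<Rightarrow> (nat \<Rightarrow> complex) set" where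
  "critical_values n F =
     proj_pi n ` {p \<in> Sigma_set n F. singular_pt n F p \<or> \<not> submersion_at n F p}"

text \<open>Wave front W_t (the square root s of 1 + sum F_j^2 must be nonzero).\<close>
definition wave_front :: "nat \<Rightarrow> ((nat \<Rightarrow> complex) \<Rightarrow> complex) \<Rightarrow> complex \<Rightarrow> (nat \<Rightarrow> complex) set" where
  "wave_front n F t = {x. (\<forall>i>n. x i = 0) \<and>
     (\<exists>z u s \<sigma>. (z, u) \<in> Yset F \<and> (\<forall>j\<ge>n. z j = 0) \<and>
        s\<^sup>2 = 1 + (\<Sum>j<n. (partial_c F j z)\<^sup>2) \<and> s \<noteq> 0 \<and> \<sigma> \<in> {1, -1::complex} \<and>
        (\<forall>j<n. x j = \<sigma> * t * partial_c F j z / s + z j) \<and>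
        x n = \<sigma> * t / s + u)}"

end

theory Submission
  imports Defs
begin


inductive_set pf :: "nat \<Rightarrow> ((nat \<Rightarrow> complex) \<Rightarrow> complex) set" for N where
  pf_const: "(\<lambda>z. c) \<in> pf N"
| pf_proj: "j < N \<Longrightarrow> (\<lambda>z. z j) \<in> pf N"
| pf_add: "f \<in> pf N \<Longrightarrow> g \<in> pf N \<Longrightarrow> (\<lambda>z. f z + g z) \<in> pf N"
| pf_mult: "f \<in> pf N \<Longrightarrow> g \<in> pf N \<Longrightarrow> (\<lambda>z. f z * g z) \<in> pf N"

definition hp :: "((nat \<Rightarrow> complex) \<Rightarrow> complex) \<Rightarrow> nat \<Rightarrow> bool" where
  "hp G i \<longleftrightarrow> (\<forall>z w. ((\<lambda>v. G (z(i:=v))) has_field_derivative partial_c G i (z(i:=w))) (at w))"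

lemma partial_c_eqI:
  assumes "\<And>z w. ((\<lambda>v. G (z(i:=v))) has_field_derivative G' (z(i:=w))) (at w)"
  shows "partial_c G i = G'"
proof
  fix p
  have "deriv (\<lambda>w. G (p(i:=w))) (p i) = G' (p(i:=p i))"
    by (rule DERIV_imp_deriv[OF assms])
  then show "partial_c G i p = G' p" by (simp add: partial_c_def)
qed

lemma hpI:
  assumes "\<And>z w. ((\<lambda>v. G (z(i:=v))) has_field_derivative G' (z(i:=w))) (at w)"
  shows "hp G i \<and> partial_c G i = G'"
  using partial_c_eqI[OF assms] assms unfolding hp_def by auto

lemma pf_partial: "G \<in> pf N \<Longrightarrow> partial_c G i \<in> pf N \<and> hp G i"
proof (induction rule: pf.induct)
  case (pf_const c)
  have "hp (\<lambda>z. c) i \<and> partial_c (\<lambda>z. c) i = (\<lambda>z. 0)"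
    by (rule hpI) simp
  then show ?case using pf.pf_const by auto
next
  case (pf_proj j)
  have "hp (\<lambda>z. z j) i \<and> partial_c (\<lambda>z. z j) i = (\<lambda>z. if i = j then 1 else 0)"
  proof (rule hpI)
    fix z :: "nat \<Rightarrow> complex" and w
    show "((\<lambda>v. (z(i:=v)) j) has_field_derivative (if i = j then 1 else 0)) (at w)"
      by (cases "i = j") (auto intro!: derivative_eq_intros)
  qed
  then show ?case by (auto intro: pf.pf_const)
next
  case (pf_add f g)
  have "hp (\<lambda>z. f z + g z) i \<and> partial_c (\<lambda>z. f z + g z) i = (\<lambda>z. partial_c f i z + partial_c g i z)"
  proof (rule hpI)
    fix z :: "nat \<Rightarrow> complex" and w
    show "((\<lambda>v. f (z(i:=v)) + g (z(i:=v))) has_field_derivative partial_c f i (z(i:=w)) + partial_c g i (z(i:=w))) (at w)"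
      using pf_add.IH unfolding hp_def by (intro DERIV_add) auto
  qed
  then show ?case using pf_add.IH by (auto intro: pf.pf_add)
next
  case (pf_mult f g)
  have "hp (\<lambda>z. f z * g z) i \<and> partial_c (\<lambda>z. f z * g z) i = (\<lambda>z. partial_c f i z * g z + f z * partial_c g i z)"
  proof (rule hpI)
    fix z :: "nat \<Rightarrow> complex" and w
    show "((\<lambda>v. f (z(i:=v)) * g (z(i:=v))) has_field_derivative partial_c f i (z(i:=w)) * g (z(i:=w)) + f (z(i:=w)) * partial_c g i (z(i:=w))) (at w)"
      using pf_mult.IH unfolding hp_def by (intro DERIV_cong[OF DERIV_mult]) (auto simp: mult.commute)
  qed
  then show ?case using pf_mult pf.pf_add pf.pf_mult by auto
qed

lemma partial_c_add: "f \<in> pf N \<Longrightarrow> g \<in> pf N \<Longrightarrow> partial_c (\<lambda>z. f z + g z) i = (\<lambda>z. partial_c f i z + partial_c g i z)"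
  by (rule partial_c_eqI) (use pf_partial in \<open>auto simp: hp_def intro!: DERIV_add\<close>)

lemma partial_c_mult: assumes "f \<in> pf N" "g \<in> pf N" shows "partial_c (\<lambda>z. f z * g z) i = (\<lambda>z. partial_c f i z * g z + f z * partial_c g i z)"
proof (rule partial_c_eqI)
  fix z :: "nat \<Rightarrow> complex" and w
  show "((\<lambda>v. f (z(i:=v)) * g (z(i:=v))) has_field_derivative partial_c f i (z(i:=w)) * g (z(i:=w)) + f (z(i:=w)) * partial_c g i (z(i:=w))) (at w)"
    using pf_partial[OF assms(1), of i] pf_partial[OF assms(2), of i] unfolding hp_def
    by (intro DERIV_cong[OF DERIV_mult]) (auto simp: mult.commute)
qed

lemma partial_c_const: "partial_c (\<lambda>z. c) i = (\<lambda>z. 0)"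
  by (rule partial_c_eqI) simp

lemma partial_c_proj: "partial_c (\<lambda>z. z j) i = (\<lambda>z. if i = j then 1 else 0)"
  by (rule partial_c_eqI) (auto intro!: derivative_eq_intros)

lemma pf_dir:
  assumes "G \<in> pf N"
  shows "((\<lambda>h. G (\<lambda>k. p k + h * v k)) has_field_derivative
           (\<Sum>i<N. partial_c G i (\<lambda>k. p k + h0 * v k) * v i)) (at h0)"
  using assms
proof (induction rule: pf.induct)
  case (pf_const c)
  then show ?case by (simp add: partial_c_const)
next
  case (pf_proj j)
  have "(\<Sum>i<N. (if i = j then 1 else 0) * v i) = v j"
  proof -
    have "(\<Sum>i<N. (if i = j then 1 else 0) * v i) = (\<Sum>i<N. if i = j then v i else 0)"
      by (rule sum.cong) auto
    also have "\<dots> = v j" using pf_proj by simp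
    finally show ?thesis .
  qed
  then show ?case by (auto simp: partial_c_proj intro!: derivative_eq_intros)
next
  case (pf_add f g)
  show ?case
    using DERIV_add[OF pf_add.IH]
    by (simp add: partial_c_add[OF pf_add.hyps] sum.distrib distrib_right)
next
  case (pf_mult f g)
  show ?case
    using DERIV_mult[OF pf_mult.IH]
    by (simp add: partial_c_mult[OF pf_mult.hyps] sum.distrib distrib_right sum_distrib_left sum_distrib_right algebra_simps)
qed

lemma pf_minus: "f \<in> pf N \<Longrightarrow> g \<in> pf N \<Longrightarrow> (\<lambda>z. f z - g z) \<in> pf N"
proof -
  assume a: "f \<in> pf N" "g \<in> pf N"
  have "(\<lambda>z. f z + (\<lambda>z. -1) z * g z) \<in> pf N" by (intro pf.intros a)
  then show ?thesis by simp
qed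

lemma pf_sum: "finite A \<Longrightarrow> (\<And>j. j \<in> A \<Longrightarrow> f j \<in> pf N) \<Longrightarrow> (\<lambda>z. \<Sum>j\<in>A. f j z) \<in> pf N"
proof (induction A rule: finite_induct)
  case empty then show ?case using pf_const[of 0] by simp
next
  case (insert x F)
  have "(\<lambda>z. f x z + (\<lambda>z. \<Sum>j\<in>F. f j z) z) \<in> pf N" using insert by (intro pf.intros) auto
  then show ?case using insert by simp
qed

lemma pf_prod: "finite A \<Longrightarrow> (\<And>j. j \<in> A \<Longrightarrow> f j \<in> pf N) \<Longrightarrow> (\<lambda>z. \<Prod>j\<in>A. f j z) \<in> pf N"
proof (induction A rule: finite_induct)
  case empty then show ?case using pf_const[of 1] by simp
next
  case (insert x F)
  have "(\<lambda>z. f x z * (\<lambda>z. \<Prod>j\<in>F. f j z) z) \<in> pf N" using insert by (intro pf.intros) auto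
  then show ?case using insert by simp
qed

lemma pf_pow: "f \<in> pf N \<Longrightarrow> (\<lambda>z. f z ^ k) \<in> pf N"
proof (induction k)
  case 0 then show ?case using pf_const[of 1] by simp
next
  case (Suc k)
  have "(\<lambda>z. f z * (\<lambda>z. f z ^ k) z) \<in> pf N" using Suc by (intro pf.intros) auto
  then show ?case by simp
qed

lemma zc_lt: "j < n \<Longrightarrow> zc n q j = q (n + 2 + j)"
  by (simp add: zc_def)

lemma pf_comp_zc: "G \<in> pf n \<Longrightarrow> (\<lambda>p. G (zc n p)) \<in> pf (2*n+3)"
proof (induction rule: pf.induct)
  case (pf_const c) then show ?case by (rule pf.pf_const)
next
  case (pf_proj j)
  have "(\<lambda>p. p (n + 2 + j)) \<in> pf (2*n+3)" using pf_proj by (intro pf.pf_proj) simp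
  then show ?case using pf_proj by (simp add: zc_lt)
next
  case (pf_add f g) then show ?case using pf.pf_add[OF pf_add.IH] by simp
next
  case (pf_mult f g) then show ?case using pf.pf_mult[OF pf_mult.IH] by simp
qed

lemma F_pf: assumes "real_poly_fun n F" shows "F \<in> pf n"
proof -
  obtain A c where A: "finite A" "\<And>z. F z = (\<Sum>\<alpha>\<in>A. of_real (c \<alpha>) * (\<Prod>j<n. z j ^ \<alpha> j))"
    using assms unfolding real_poly_fun_def by blast
  have "(\<lambda>z. \<Sum>\<alpha>\<in>A. (\<lambda>z. of_real (c \<alpha>)) z * (\<lambda>z. \<Prod>j<n. z j ^ \<alpha> j) z) \<in> pf n"
    by (intro pf_sum A(1) pf.pf_mult pf.pf_const pf_prod pf_pow pf.pf_proj) auto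
  moreover have "F = (\<lambda>z. \<Sum>\<alpha>\<in>A. (\<lambda>z. of_real (c \<alpha>)) z * (\<lambda>z. \<Prod>j<n. z j ^ \<alpha> j) z)"
    using A(2) by auto
  ultimately show ?thesis by simp
qed

lemma pF_pf: assumes "real_poly_fun n F" shows "(\<lambda>p. partial_c F j (zc n p)) \<in> pf (2*n+3)"
  using pf_comp_zc pf_partial F_pf[OF assms] by blast

lemma psi_pf: assumes "real_poly_fun n F" shows "psi n F \<in> pf (2*n+3)"
proof -
  have pp: "\<And>i. i < 2*n+3 \<Longrightarrow> (\<lambda>p. p i) \<in> pf (2*n+3)" by (rule pf.pf_proj)
  have "(\<lambda>p. ((\<Sum>j<n. (p j - p (n+2+j)) * partial_c F j (zc n p)) + p n - p (2*n+2))\<^sup>2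
     - (p (n+1))\<^sup>2 * (1 + (\<Sum>j<n. (partial_c F j (zc n p))\<^sup>2))) \<in> pf (2*n+3)"
    by (intro pf_minus pf.pf_add pf.pf_mult pf_pow pf_sum pp pF_pf[OF assms] pf.pf_const) auto
  moreover have "psi n F = (\<lambda>p. ((\<Sum>j<n. (p j - p (n+2+j)) * partial_c F j (zc n p)) + p n - p (2*n+2))\<^sup>2
     - (p (n+1))\<^sup>2 * (1 + (\<Sum>j<n. (partial_c F j (zc n p))\<^sup>2)))"
    by (auto simp: psi_def uc_def tc_def zc_lt intro!: sum.cong)
  ultimately show ?thesis by simp
qed

lemma G1_pf: assumes "real_poly_fun n F" shows "G1 n F \<in> pf (2*n+3)"
proof -
  have "(\<lambda>p. (\<lambda>p. F (zc n p)) p + (\<lambda>p. p (2*n+2)) p) \<in> pf (2*n+3)"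
    by (intro pf.pf_add pf_comp_zc F_pf[OF assms] pf.pf_proj) auto
  moreover have "G1 n F = (\<lambda>p. (\<lambda>p. F (zc n p)) p + (\<lambda>p. p (2*n+2)) p)"
    by (simp add: fun_eq_iff G1_def uc_def)
  ultimately show ?thesis by simp
qed

lemma shape_deriv:
  fixes a b g' :: "nat \<Rightarrow> complex" and g :: "nat \<Rightarrow> complex \<Rightarrow> complex"
  assumes "\<And>j. j<n \<Longrightarrow> (g j has_field_derivative g' j) (at 0)"
  shows "((\<lambda>h. ((\<Sum>j<n. (a j + h*b j) * g j h) + (c + h*d))\<^sup>2 - (t + h*e)\<^sup>2 * (1 + (\<Sum>j<n. (g j h)\<^sup>2)))
     has_field_derivative
     2 * ((\<Sum>j<n. a j * g j 0) + c) * ((\<Sum>j<n. b j * g j 0 + a j * g' j) + d)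
       - 2*t*e*(1 + (\<Sum>j<n. (g j 0)\<^sup>2)) - t\<^sup>2 * (\<Sum>j<n. 2 * g j 0 * g' j)) (at 0)"
proof -
  have s1: "((\<lambda>h. \<Sum>j<n. (a j + h*b j) * g j h) has_field_derivative (\<Sum>j<n. b j * g j 0 + a j * g' j)) (at 0)"
    by (rule DERIV_sum) (auto intro!: derivative_eq_intros assms)
  have s2: "((\<lambda>h. \<Sum>j<n. (g j h)\<^sup>2) has_field_derivative (\<Sum>j<n. 2 * g j 0 * g' j)) (at 0)"
    by (rule DERIV_sum) (auto intro!: derivative_eq_intros assms)
  show ?thesis
    by (rule DERIV_cong, (rule derivative_intros s1 s2)+) (simp add: algebra_simps)
qed

lemma zc_lin: "zc n (\<lambda>k. p k + h * v k) = (\<lambda>k. zc n p k + h * zc n v k)"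
  by (simp add: zc_def fun_eq_iff)

lemma dir_F:
  assumes "real_poly_fun n F"
  shows "((\<lambda>h. F (zc n (\<lambda>k. p k + h * v k))) has_field_derivative
           (\<Sum>j<n. partial_c F j (zc n p) * v (n+2+j))) (at 0)"
proof -
  have "((\<lambda>h. F (\<lambda>k. zc n p k + h * zc n v k)) has_field_derivative
           (\<Sum>j<n. partial_c F j (\<lambda>k. zc n p k + 0 * zc n v k) * zc n v j)) (at 0)"
    by (rule pf_dir[OF F_pf[OF assms]])
  then show ?thesis by (simp add: zc_lin zc_lt)
qed

lemma dir_pF:
  assumes "real_poly_fun n F"
  shows "\<exists>d. ((\<lambda>h. partial_c F j (zc n (\<lambda>k. p k + h * v k))) has_field_derivative d) (at 0)"
proof -
  have "partial_c F j \<in> pf n" using pf_partial F_pf[OF assms] by blast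
  from pf_dir[OF this, of "zc n p" "zc n v" 0] show ?thesis by (auto simp: zc_lin)
qed

lemma dir_G1:
  assumes "real_poly_fun n F"
  shows "(\<Sum>i<2*n+3. partial_c (G1 n F) i p * v i) = (\<Sum>j<n. partial_c F j (zc n p) * v (n+2+j)) + v (2*n+2)"
proof -
  have d1: "((\<lambda>h. G1 n F (\<lambda>k. p k + h * v k)) has_field_derivative (\<Sum>i<2*n+3. partial_c (G1 n F) i p * v i)) (at 0)"
    using pf_dir[OF G1_pf[OF assms], of p v 0] by simp
  have d2: "((\<lambda>h. G1 n F (\<lambda>k. p k + h * v k)) has_field_derivative (\<Sum>j<n. partial_c F j (zc n p) * v (n+2+j)) + v (2*n+2)) (at 0)"
    unfolding G1_def uc_def
    by (rule DERIV_cong, (rule derivative_intros dir_F[OF assms])+) simp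
  show ?thesis using DERIV_unique[OF d1 d2] .
qed


lemma dir_psi:
  assumes "real_poly_fun n F"
  shows "\<exists>g'. (\<Sum>i<2*n+3. partial_c (psi n F) i p * v i) =
     2 * ((\<Sum>j<n. (p j - p (n+2+j)) * partial_c F j (zc n p)) + (p n - p (2*n+2)))
       * ((\<Sum>j<n. (v j - v (n+2+j)) * partial_c F j (zc n p) + (p j - p (n+2+j)) * g' j) + (v n - v (2*n+2)))
       - 2 * p (n+1) * v (n+1) * (1 + (\<Sum>j<n. (partial_c F j (zc n p))\<^sup>2))
       - (p (n+1))\<^sup>2 * (\<Sum>j<n. 2 * partial_c F j (zc n p) * g' j)"
proof -
  define g where "g j h = partial_c F j (zc n (\<lambda>k. p k + h * v k))" for j h
  have ex: "\<forall>j. \<exists>d. (g j has_field_derivative d) (at 0)"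
    unfolding g_def using dir_pF[OF assms] by blast
  obtain g' where g'a: "\<forall>j. (g j has_field_derivative g' j) (at 0)"
    using choice[OF ex] by blast
  have g': "\<And>j. (g j has_field_derivative g' j) (at 0)" using g'a by blast
  have g0: "g j 0 = partial_c F j (zc n p)" for j by (simp add: g_def)
  have d1: "((\<lambda>h. psi n F (\<lambda>k. p k + h * v k)) has_field_derivative (\<Sum>i<2*n+3. partial_c (psi n F) i p * v i)) (at 0)"
    using pf_dir[OF psi_pf[OF assms], of p v 0] by simp
  have eq: "psi n F (\<lambda>k. p k + h * v k) =
     ((\<Sum>j<n. ((p j - p (n+2+j)) + h * (v j - v (n+2+j))) * g j h) + ((p n - p (2*n+2)) + h * (v n - v (2*n+2))))\<^sup>2
      - (p (n+1) + h * v (n+1))\<^sup>2 * (1 + (\<Sum>j<n. (g j h)\<^sup>2))" for h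
  proof -
    have "(\<Sum>j<n. ((\<lambda>k. p k + h * v k) j - zc n (\<lambda>k. p k + h * v k) j) * partial_c F j (zc n (\<lambda>k. p k + h * v k)))
       = (\<Sum>j<n. ((p j - p (n+2+j)) + h * (v j - v (n+2+j))) * g j h)"
      by (rule sum.cong) (auto simp: zc_lt g_def algebra_simps)
    note S = this
    have e2: "\<And>X. X + (p n + h * v n) - (p (2*n+2) + h * v (2*n+2)) = X + ((p n - p (2*n+2)) + h*(v n - v (2*n+2)))"
      by (simp add: algebra_simps)
    show ?thesis unfolding psi_def uc_def tc_def by (simp only: S e2) (simp add: g_def)
  qed
  note d2 = shape_deriv[of n g g' "\<lambda>j. p j - p (n+2+j)" "\<lambda>j. v j - v (n+2+j)" "p n - p (2*n+2)" "v n - v (2*n+2)" "p (n+1)" "v (n+1)", OF g']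
  show ?thesis
    apply (rule exI[of _ g'])
    apply (rule DERIV_unique[OF d1])
    unfolding eq using d2 unfolding g0 .
qed



lemma sum_delta_mult: "(i::nat) < N \<Longrightarrow> (\<Sum>k<N. f k * (if k = i then 1 else 0)) = (f i :: complex)"
proof -
  assume "i < N"
  have "(\<Sum>k<N. f k * (if k = i then 1 else 0)) = (\<Sum>k<N. if k = i then f k else 0)"
    by (rule sum.cong) auto
  also have "\<dots> = f i" using \<open>i < N\<close> sum.delta[of "{..<N}" i f] by simp
  finally show ?thesis .
qed

theorem lemma1:
  fixes n :: nat and F :: "(nat \<Rightarrow> complex) \<Rightarrow> complex" and x :: "nat \<Rightarrow> complex" and t :: complex
  assumes "n \<ge> 1"
    and "real_poly_fun n F"
    and "x \<in> wave_front n F t"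
  shows "(\<lambda>i. if i \<le> n then x i else if i = n + 1 then t else 0) \<in> critical_values n F"
proof -
  obtain z u s \<sigma> where x0: "\<forall>i>n. x i = 0" and Y: "F z + u = 0" and z0: "\<forall>j\<ge>n. z j = 0"
    and s2: "s\<^sup>2 = 1 + (\<Sum>j<n. (partial_c F j z)\<^sup>2)" and s0: "s \<noteq> 0" and sig: "\<sigma> \<in> {1, -1::complex}"
    and xj: "\<forall>j<n. x j = \<sigma> * t * partial_c F j z / s + z j"
    and xn: "x n = \<sigma> * t / s + u"
    using assms(3) unfolding wave_front_def Yset_def by auto
  define D where "D j = partial_c F j z" for j
  define p where "p = (\<lambda>i. if i \<le> n then x i else if i = n+1 then t else if i < 2 * n+2 then z (i - (n+2))
      else if i = 2 * n+2 then u else 0)"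
  have pj: "j \<le> n \<Longrightarrow> p j = x j" for j by (simp add: p_def)
  have pt: "p (n+1) = t" by (simp add: p_def)
  have pu: "p (2 * n+2) = u" by (simp add: p_def)
  have pu': "p (Suc (Suc (2 * n))) = u" by (simp add: p_def)
  have pz: "j < n \<Longrightarrow> p (n+2+j) = z j" for j by (simp add: p_def)
  have pz': "j < n \<Longrightarrow> p (Suc (Suc (n+j))) = z j" for j by (simp add: p_def)
  have zcp: "zc n p = z"
  proof
    fix j show "zc n p j = z j"
    proof (cases "j < n")
      case True then show ?thesis by (simp only: zc_lt pz)
    qed (use z0 in \<open>auto simp: zc_def\<close>)
  qed
  have sig2: "\<sigma>\<^sup>2 = 1" using sig by auto
  have a_eq: "j < n \<Longrightarrow> p j - p (n+2+j) = \<sigma> * t * D j / s" for j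
    using xj by (simp add: pj pz' D_def)
  have a_eq': "j < n \<Longrightarrow> p j - p (Suc (Suc (n+j))) = \<sigma> * t * D j / s" for j
    using a_eq[of j] by simp
  have c_eq: "p n - p (2 * n+2) = \<sigma> * t / s" using xn by (simp add: pj pu')
  have Q: "1 + (\<Sum>j<n. (D j)\<^sup>2) = s\<^sup>2" using s2 by (simp add: D_def)
  have L: "(\<Sum>j<n. (p j - p (n+2+j)) * D j) + (p n - p (2 * n+2)) = \<sigma> * t * s"
  proof -
    have "(\<Sum>j<n. (p j - p (n+2+j)) * D j) = (\<Sum>j<n. (\<sigma> * t / s) * (D j)\<^sup>2)"
      by (rule sum.cong) (auto simp: a_eq' power2_eq_square)
    also have "\<dots> = (\<sigma> * t / s) * (\<Sum>j<n. (D j)\<^sup>2)" by (simp add: sum_distrib_left)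
    finally have S1: "(\<Sum>j<n. (p j - p (n+2+j)) * D j) = (\<sigma> * t / s) * (\<Sum>j<n. (D j)\<^sup>2)" .
    have "(\<Sum>j<n. (p j - p (n+2+j)) * D j) + (p n - p (2 * n+2)) = (\<sigma> * t / s) * (\<Sum>j<n. (D j)\<^sup>2) + \<sigma> * t / s"
      by (simp only: S1 c_eq)
    also have "\<dots> = (\<sigma> * t / s) * (1 + (\<Sum>j<n. (D j)\<^sup>2))" by (simp add: algebra_simps)
    also have "\<dots> = \<sigma> * t * s" using Q s0 by (simp add: power2_eq_square)
    finally show ?thesis .
  qed
  have psi0: "psi n F p = 0"
  proof -
    have "(\<Sum>j<n. (p j - zc n p j) * partial_c F j (zc n p)) = (\<Sum>j<n. (p j - p (n+2+j)) * D j)"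
      by (rule sum.cong) (auto simp: zc_lt D_def zcp[symmetric])
    then have "psi n F p = ((\<Sum>j<n. (p j - p (n+2+j)) * D j) + (p n - p (2 * n+2)))\<^sup>2 - t\<^sup>2 * (1 + (\<Sum>j<n. (D j)\<^sup>2))"
      unfolding psi_def uc_def tc_def pt by (simp add: zcp D_def algebra_simps)
    also have "\<dots> = 0" unfolding L Q using sig2 by (simp add: power_mult_distrib)
    finally show ?thesis .
  qed
  have pS: "p \<in> Sigma_set n F"
  proof -
    have "\<forall>i\<ge>2 * n+3. p i = 0" by (simp add: p_def)
    moreover have "uc n p = u" using pu by (simp add: uc_def)
    ultimately show ?thesis unfolding Sigma_set_def Yset_def using psi0 Y zcp by auto
  qed
  have proj: "proj_pi n p = (\<lambda>i. if i \<le> n then x i else if i = n + 1 then t else 0)"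
    by (auto simp: proj_pi_def p_def fun_eq_iff)
  have key: "(\<Sum>i<2 * n+3. partial_c (psi n F) i p * v i) =
      2 * \<sigma> * t* s * ((\<Sum>j<n. v j * D j) - (\<Sum>j<n. v (n+2+j) * D j) + v n - v (2 * n+2)) - 2 * t* v (n+1)* s\<^sup>2" for v
  proof -
    from dir_psi[OF assms(2), of p v] obtain g' where g': "(\<Sum>i<2 * n+3. partial_c (psi n F) i p * v i) =
     2 * ((\<Sum>j<n. (p j - p (n+2+j)) * partial_c F j (zc n p)) + (p n - p (2 * n+2)))
       * ((\<Sum>j<n. (v j - v (n+2+j)) * partial_c F j (zc n p) + (p j - p (n+2+j)) * g' j) + (v n - v (2 * n+2)))
       - 2 * p (n+1) * v (n+1) * (1 + (\<Sum>j<n. (partial_c F j (zc n p))\<^sup>2))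
       - (p (n+1))\<^sup>2 * (\<Sum>j<n. 2 * partial_c F j (zc n p) * g' j)"
      by (rule exE)
    define B where "B = (\<Sum>j<n. D j * g' j)"
    have s1: "(\<Sum>j<n. (v j - v (n+2+j)) * D j + (p j - p (n+2+j)) * g' j)
        = (\<Sum>j<n. v j * D j) - (\<Sum>j<n. v (n+2+j) * D j) + (\<sigma> * t / s) * B"
    proof -
      have "(\<Sum>j<n. (v j - v (n+2+j)) * D j + (p j - p (n+2+j)) * g' j)
          = (\<Sum>j<n. v j * D j - v (n+2+j) * D j + (\<sigma> * t / s) * (D j * g' j))"
      proof (rule sum.cong)
        fix j assume "j \<in> {..<n}"
        then have aj: "p j - p (n+2+j) = \<sigma> * t * D j / s" by (intro a_eq) simp
        show "(v j - v (n+2+j)) * D j + (p j - p (n+2+j)) * g' j = v j * D j - v (n+2+j) * D j + (\<sigma> * t / s) * (D j * g' j)"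
          unfolding aj by (simp add: algebra_simps)
      qed simp
      also have "\<dots> = (\<Sum>j<n. v j * D j) - (\<Sum>j<n. v (n+2+j) * D j) + (\<sigma> * t / s) * B"
        by (simp add: sum.distrib sum_subtractf sum_distrib_left B_def)
      finally show ?thesis .
    qed
    have s3: "(\<Sum>j<n. 2 * D j * g' j) = 2 * B"
      by (simp add: B_def sum_distrib_left mult.assoc)
    have "(\<Sum>i<2 * n+3. partial_c (psi n F) i p * v i) =
       2 * (\<sigma> * t * s) * ((\<Sum>j<n. v j * D j) - (\<Sum>j<n. v (n+2+j) * D j) + (\<sigma> * t / s) * B + (v n - v (2 * n+2)))
       - 2 * t * v (n+1) * s\<^sup>2 - t\<^sup>2 * (2 * B)"
      using g' unfolding zcp D_def[symmetric] L s1 s3 Q pt by simp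
    also have "\<dots> = 2 * \<sigma> * t* s * ((\<Sum>j<n. v j * D j) - (\<Sum>j<n. v (n+2+j) * D j) + v n - v (2 * n+2))
        + 2 * \<sigma>\<^sup>2 * t\<^sup>2 * B - 2 * t* v (n+1)* s\<^sup>2 - 2 * t\<^sup>2 * B"
      using s0 by (simp add: field_simps power2_eq_square)
    also have "\<dots> = 2 * \<sigma> * t* s * ((\<Sum>j<n. v j * D j) - (\<Sum>j<n. v (n+2+j) * D j) + v n - v (2 * n+2)) - 2 * t* v (n+1)* s\<^sup>2"
      using sig2 by simp
    finally show ?thesis .
  qed
  have "singular_pt n F p \<or> \<not> submersion_at n F p"
  proof (cases "t = 0")
    case True
    have "\<forall>i<2 * n+3. 0 * partial_c (G1 n F) i p + 1 * partial_c (psi n F) i p = 0"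
    proof (intro allI impI)
      fix i assume i: "i < 2 * n+3"
      have "partial_c (psi n F) i p = (\<Sum>k<2 * n+3. partial_c (psi n F) k p * (if k = i then 1 else 0))"
        using sum_delta_mult[OF i] by simp
      also have "\<dots> = 0" unfolding key using True by simp
      finally show "0 * partial_c (G1 n F) i p + 1 * partial_c (psi n F) i p = 0" by simp
    qed
    then have "singular_pt n F p" unfolding singular_pt_def by (intro exI[of _ 0] exI[of _ 1]) auto
    then show ?thesis ..
  next
    case False
    have "\<not> submersion_at n F p"
    proof
      assume "submersion_at n F p"
      then have "\<exists>v\<in>tangent_sp n F p. \<forall>i<n+2. v i = (if i = n+1 then 1 else 0)"
        unfolding submersion_at_def by (rule allE)
      then obtain v where v: "v \<in> tangent_sp n F p" and vw: "\<forall>i<n+2. v i = (if i = n+1 then 1 else 0)"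
        by blast
      have tG: "(\<Sum>i<2 * n+3. partial_c (G1 n F) i p * v i) = 0"
        and tP: "(\<Sum>i<2 * n+3. partial_c (psi n F) i p * v i) = 0"
        using v unfolding tangent_sp_def by auto
      have Z: "(\<Sum>j<n. v (n+2+j) * D j) + v (2 * n+2) = 0"
        using tG unfolding dir_G1[OF assms(2)] zcp D_def by (simp add: mult.commute)
      have V: "(\<Sum>j<n. v j * D j) = 0" using vw by (intro sum.neutral) auto
      have "v n = 0" "v (n+1) = 1" using vw by auto
      have E: "0 - (\<Sum>j<n. v (n+2+j) * D j) + v n - v (2 * n+2) = 0"
      proof -
        have "0 - (\<Sum>j<n. v (n+2+j) * D j) + v n - v (2 * n+2) = - ((\<Sum>j<n. v (n+2+j) * D j) + v (2 * n+2))"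
          using \<open>v n = 0\<close> by simp
        also have "\<dots> = 0" by (simp only: Z minus_zero)
        finally show ?thesis .
      qed
      have "0 = 2 * \<sigma> * t* s * 0 - 2 * t* 1 * s\<^sup>2"
        using tP unfolding key V by (simp only: E \<open>v (n+1) = 1\<close>)
      then have "t * s\<^sup>2 = 0" by simp
      then show False using False s0 by simp
    qed
    then show ?thesis ..
  qed
  then show ?thesis
    unfolding critical_values_def using pS proj[symmetric] by blast
qed

end
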